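(* Let $\mathbb{G}$ be a connected undirected graph on $m$ agents with neighbor sets $\mathcal{N}_i$. For each agent $i$, let $f_i:\mathbb{R}^n\to\mathbb{R}$, $A_i\in\mathbb{R}^{n_i\times n}$, $b_i\in\operatorname{image}A_i$, and let $P_i$ be the orthogonal projection matrix onto $\ker A_i$. Suppose each $f_i$ is convex and continuously differentiable with Lipschitz gradient; $\operatorname{rank}(\mathrm{col}\{A_1,\dots,A_m\})<n$; the set $\{x: A_ix=b_i\ \forall i\}$ is non-empty; and a (possibly non-unique) minimizer of $F(x)=\sum_{i=1}^m f_i(x)$ subject to $A_ix=b_i$ for all $i$ exists. Consider the dynamics $\dot x_i=-P_i\big(\nabla f_i(x_i)+\sum_{j\in\mathcal{N}_i}(x_i-x_j)+y_i\big)$, $\dot y_i=\sum_{j\in\mathcal{N}_i}(x_i-x_j)$, $y_i(0)=0$, $A_ix_i(0)=b_i$ (equivalent to the integral-feedback update $\dot x_i=-P_i(\nabla f_i(x_i)+\sum_{j\in\mathcal{N}_i}(x_i-x_j)+\int_0^t\sum_{j\in\mathcal{N}_i}(x_i-x_j))$). Call $(x_1^*,\dots,x_m^*,y_1^*,\dots,y_m^* )$ an equilibrium point if $A_ix_i^*=b_i$ for all $i$, $\sum_{i=1}^m y_i^*=0$, and for all $i$: $$0=-P_i\Big(\nabla f_i(x_i^* )+\sum_{j\in\mathcal{N}_i}(x_i^*-x_j^* )+y_i^*\Big),\qquad 0=\sum_{j\in\mathcal{N}_i}(x_i^*-x_j^* ).$$ Then an equilibrium point exists. Furthermore, for every equilibrium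 point there is $x^*\in\mathbb{R}^n$ with $x_i^*=x^*$ for all $i=1,\dots,m$, and $x^*$ minimizes $\sum_{i=1}^m f_i(x)$ subject to $A_ix=b_i$, $i=1,\dots,m$.
   Context: $\nabla f_i$ denotes the gradient of $f_i$. Neighbor relations are symmetric: $j\in\mathcal{N}_i$ iff $i\in\mathcal{N}_j$. The conditions $A_ix_i^*=b_i$ and $\sum_i y_i^*=0$ reflect invariants of the dynamics: $A_ix_i(t)=b_i$ for all $t$, and $y(t)$ stays in the image of the graph Laplacian (Kronecker) $L\otimes I_n$. *)

theory Defs
  imports "HOL-Analysis.Analysis"
begin

text \<open>Agents are the elements of a finite type 'a (m = CARD('a)).
  A matrix A_i in R^(n_i x n) is represented by the list of its rows.\<close>

definition undirected_simple_graph :: "('a \<Rightarrow> 'a set) \<Rightarrow> bool" where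
  "undirected_simple_graph N \<longleftrightarrow> (\<forall>i j. j \<in> N i \<longleftrightarrow> i \<in> N j) \<and> (\<forall>i. i \<notin> N i)"

definition graph_connected :: "('a \<Rightarrow> 'a set) \<Rightarrow> bool" where
  "graph_connected N \<longleftrightarrow> (\<forall>i j. (i, j) \<in> {(u, v). v \<in> N u}\<^sup>*)"

definition matvec :: "(real ^ 'n) list \<Rightarrow> real ^ 'n \<Rightarrow> real list" where
  "matvec A x = map (\<lambda>r. r \<bullet> x) A"

definition matker :: "(real ^ 'n) list \<Rightarrow> (real ^ 'n) set" where
  "matker A = {x. matvec A x = replicate (length A) 0}"

definition orth_proj_matrix :: "real ^ 'n ^ 'n \<Rightarrow> (real ^ 'n) set \<Rightarrow> bool" where
  "orth_proj_matrix P S \<longleftrightarrow>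
     (\<forall>x. P *v x \<in> S \<and> (\<forall>s\<in>S. (x - P *v x) \<bullet> s = 0))"

text \<open>Rank of the stacked matrix col{A_1,...,A_m} (row rank).\<close>
definition stacked_rank :: "('a \<Rightarrow> (real ^ 'n) list) \<Rightarrow> nat" where
  "stacked_rank A = nat (dim (\<Union>i. set (A i)))"

definition feasible :: "('a \<Rightarrow> (real ^ 'n) list) \<Rightarrow> ('a \<Rightarrow> real list) \<Rightarrow> real ^ 'n \<Rightarrow> bool" where
  "feasible A b x \<longleftrightarrow> (\<forall>i. matvec (A i) x = b i)"

definition is_constrained_minimizer ::
  "('a::finite \<Rightarrow> real ^ 'n \<Rightarrow> real) \<Rightarrow> ('a \<Rightarrow> (real ^ 'n) list) \<Rightarrow> ('a \<Rightarrow> real list) \<Rightarrow> real ^ 'n \<Rightarrow> bool" where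
  "is_constrained_minimizer f A b x \<longleftrightarrow>
     feasible A b x \<and> (\<forall>z. feasible A b z \<longrightarrow> (\<Sum>i\<in>UNIV. f i x) \<le> (\<Sum>i\<in>UNIV. f i z))"

definition equilibrium ::
  "('a::finite \<Rightarrow> 'a set) \<Rightarrow> ('a \<Rightarrow> real ^ 'n \<Rightarrow> real ^ 'n) \<Rightarrow> ('a \<Rightarrow> (real ^ 'n) list) \<Rightarrow>
   ('a \<Rightarrow> real list) \<Rightarrow> ('a \<Rightarrow> real ^ 'n ^ 'n) \<Rightarrow> ('a \<Rightarrow> real ^ 'n) \<Rightarrow> ('a \<Rightarrow> real ^ 'n) \<Rightarrow> bool" where
  "equilibrium N grad A b P xs ys \<longleftrightarrow>
     (\<forall>i. matvec (A i) (xs i) = b i) \<and> (\<Sum>i\<in>UNIV. ys i) = 0 \<and>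
     (\<forall>i. 0 = - (P i *v (grad i (xs i) + (\<Sum>j\<in>N i. xs i - xs j) + ys i))) \<and>
     (\<forall>i. 0 = (\<Sum>j\<in>N i. xs i - xs j))"

end

theory Submission
  imports Defs
begin

lemma matvec_zero_iff:
  "matvec A x = replicate (length A) 0 \<longleftrightarrow> (\<forall>r\<in>set A. r \<bullet> x = 0)"
  unfolding matvec_def by (induction A) auto

lemma matvec_add_orth:
  assumes "\<forall>r\<in>set A. r \<bullet> v = 0"
  shows "matvec A (x + v) = matvec A x"
  using assms unfolding matvec_def by (induction A) (auto simp: inner_add_right)

lemma matvec_diff_orth:
  assumes "matvec A z = matvec A x"
  shows "\<forall>r\<in>set A. r \<bullet> (z - x) = 0"
  using assms unfolding matvec_def by (induction A) (auto simp: inner_diff_right)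

lemma above_tangent:
  fixes f :: "real ^ 'n \<Rightarrow> real"
  assumes cv: "convex_on UNIV f" and d: "(f has_derivative (\<lambda>h. g \<bullet> h)) (at x)"
  shows "f x + g \<bullet> (z - x) \<le> f z"
proof -
  define \<phi> where "\<phi> = (\<lambda>t::real. f (x + t *\<^sub>R (z - x)))"
  have "convex_on UNIV \<phi>"
    unfolding convex_on_def
  proof (intro conjI ballI allI impI)
    fix s t u v :: real assume "0 \<le> u" "0 \<le> v" "u + v = 1"
    have "x + (u *\<^sub>R s + v *\<^sub>R t) *\<^sub>R (z - x) = u *\<^sub>R (x + s *\<^sub>R (z - x)) + v *\<^sub>R (x + t *\<^sub>R (z - x))"
      using \<open>u + v = 1\<close> by (simp add: algebra_simps flip: scaleR_add_left)
    then show "\<phi> (u *\<^sub>R s + v *\<^sub>R t) \<le> u * \<phi> s + v * \<phi> t"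
      using cv \<open>0 \<le> u\<close> \<open>0 \<le> v\<close> \<open>u + v = 1\<close> unfolding \<phi>_def convex_on_def by auto
  qed simp
  have "((\<lambda>t::real. x + t *\<^sub>R (z - x)) has_derivative (\<lambda>t. t *\<^sub>R (z - x))) (at 0)"
    by (intro derivative_eq_intros) auto
  moreover have "(f has_derivative (\<lambda>h. g \<bullet> h)) (at (x + 0 *\<^sub>R (z - x)))" using d by simp
  ultimately have "(\<phi> has_derivative (\<lambda>t. g \<bullet> (t *\<^sub>R (z - x)))) (at 0)"
    unfolding \<phi>_def by (rule has_derivative_compose)
  moreover have "(\<lambda>t. g \<bullet> (t *\<^sub>R (z - x))) = (\<lambda>t. t * (g \<bullet> (z - x)))" by simp
  ultimately have "(\<phi> has_field_derivative (g \<bullet> (z - x))) (at 0 within UNIV)"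
    unfolding has_field_derivative_def by (simp add: mult.commute[of _ "g \<bullet> (z - x)"])
  from convex_on_imp_above_tangent[OF \<open>convex_on UNIV \<phi>\<close> _ _ _ this, of 1]
  have "\<phi> 1 - \<phi> 0 \<ge> g \<bullet> (z - x) * (1 - 0)" by simp
  then show ?thesis unfolding \<phi>_def by simp
qed

lemma stationary:
  fixes F :: "real ^ 'n \<Rightarrow> real"
  assumes d: "(F has_derivative (\<lambda>h. G \<bullet> h)) (at x)"
    and m: "\<And>t. F x \<le> F (x + t *\<^sub>R v)"
  shows "G \<bullet> v = 0"
proof -
  define \<phi> where "\<phi> = (\<lambda>t::real. F (x + t *\<^sub>R v))"
  have "((\<lambda>t::real. x + t *\<^sub>R v) has_derivative (\<lambda>t. t *\<^sub>R v)) (at 0)"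
    by (intro derivative_eq_intros) auto
  moreover have "(F has_derivative (\<lambda>h. G \<bullet> h)) (at (x + 0 *\<^sub>R v))" using d by simp
  ultimately have "(\<phi> has_derivative (\<lambda>t. G \<bullet> (t *\<^sub>R v))) (at 0)"
    unfolding \<phi>_def by (rule has_derivative_compose)
  moreover have "eventually (\<lambda>y. \<phi> 0 \<le> \<phi> y) (at 0)"
    unfolding \<phi>_def using m by (simp add: always_eventually)
  ultimately have "(\<lambda>t. G \<bullet> (t *\<^sub>R v)) = (\<lambda>h. 0)"
    by (rule has_derivative_local_min)
  then show ?thesis by (metis inner_scaleR_right mult_1)
qed

lemma proj_zero:
  assumes "orth_proj_matrix P S" "\<forall>s\<in>S. v \<bullet> s = 0"
  shows "P *v v = 0"
proof -
  have "P *v v \<in> S" "(v - P *v v) \<bullet> (P *v v) = 0"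
    using assms(1) unfolding orth_proj_matrix_def by auto
  moreover have "v \<bullet> (P *v v) = 0" using assms(2) calculation by auto
  ultimately have "(P *v v) \<bullet> (P *v v) = 0" by (simp add: inner_diff_left)
  then show ?thesis by simp
qed

lemma proj_zero_orth:
  assumes "orth_proj_matrix P S" "P *v v = 0" "s \<in> S"
  shows "v \<bullet> s = 0"
  using assms unfolding orth_proj_matrix_def by (metis diff_zero)

lemma span_orth:
  assumes "u \<in> span R" "\<forall>r\<in>R. r \<bullet> s = 0"
  shows "u \<bullet> s = 0"
  using assms(1)
proof (induction rule: span_induct_alt)
  case base then show ?case by simp
next
  case (step c x y) then show ?case using assms(2) by (simp add: inner_add_left)
qed

lemma span_UN_decomp:
  fixes S :: "'i \<Rightarrow> 'v::real_vector set"
  assumes "finite I"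
  shows "x \<in> span (\<Union>i\<in>I. S i) \<Longrightarrow> \<exists>u. (\<forall>i\<in>I. u i \<in> span (S i)) \<and> x = (\<Sum>i\<in>I. u i)"
  using assms
proof (induction I arbitrary: x rule: finite_induct)
  case empty then show ?case by simp
next
  case (insert a I)
  from insert.prems have "x \<in> span (S a \<union> (\<Union>i\<in>I. S i))" by simp
  then obtain p q where pq: "x = p + q" "p \<in> span (S a)" "q \<in> span (\<Union>i\<in>I. S i)"
    unfolding span_Un by blast
  from insert.IH[OF pq(3)] obtain u where u: "\<forall>i\<in>I. u i \<in> span (S i)" "q = (\<Sum>i\<in>I. u i)" by blast
  define w where "w = u(a := p)"
  have "\<forall>i\<in>insert a I. w i \<in> span (S i)" using u pq unfolding w_def by auto
  moreover have "x = (\<Sum>i\<in>insert a I. w i)"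
  proof -
    have "(\<Sum>i\<in>I. w i) = (\<Sum>i\<in>I. u i)" using insert.hyps(2) unfolding w_def by (intro sum.cong) auto
    then show ?thesis using insert.hyps pq u unfolding w_def by simp
  qed
  ultimately show ?case by blast
qed

lemma consensus:
  fixes N :: "'a::finite \<Rightarrow> 'a set" and xs :: "'a \<Rightarrow> real ^ 'n"
  assumes conn: "graph_connected N" and eq: "\<forall>i. 0 = (\<Sum>j\<in>N i. xs i - xs j)"
  shows "xs i = xs j"
proof -
  have "xs i $ k = xs j $ k" for k
  proof -
    define h where "h = (\<lambda>j. xs j $ k)"
    define M where "M = Max (range h)"
    have "M \<in> range h" unfolding M_def by (rule Max_in) simp_all
    then obtain i0 where i0: "h i0 = M" by (metis imageE)
    have le: "h j \<le> M" for j unfolding M_def by simp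
    have stepM: "h q = M" if "h p = M" "q \<in> N p" for p q
    proof -
      have "0 = (\<Sum>j\<in>N p. xs p - xs j) $ k" using eq by simp
      also have "\<dots> = (\<Sum>j\<in>N p. M - h j)" using that(1) by (simp add: h_def)
      finally have "(\<Sum>j\<in>N p. M - h j) = 0" by simp
      then have "\<forall>j\<in>N p. M - h j = 0"
        by (subst (asm) sum_nonneg_eq_0_iff) (auto simp: le)
      then show ?thesis using that(2) by auto
    qed
    have all: "h q = M" if "(p, q) \<in> {(u, v). v \<in> N u}\<^sup>*" "h p = M" for p q
      using that
    proof (induction rule: rtrancl_induct)
      case base then show ?case by simp
    next
      case (step y z)
      then have "h y = M" "z \<in> N y" by simp_all
      then show ?case by (rule stepM)
    qed
    show ?thesis using all[OF _ i0] conn unfolding graph_connected_def h_def by metis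
  qed
  then show ?thesis by (simp add: vec_eq_iff)
qed


theorem lemma1:
  fixes N :: "'a::finite \<Rightarrow> 'a set"
    and f :: "'a \<Rightarrow> real ^ 'n \<Rightarrow> real"
    and grad :: "'a \<Rightarrow> real ^ 'n \<Rightarrow> real ^ 'n"
    and A :: "'a \<Rightarrow> (real ^ 'n) list"
    and b :: "'a \<Rightarrow> real list"
    and P :: "'a \<Rightarrow> real ^ 'n ^ 'n"
  assumes graph: "undirected_simple_graph N" and conn: "graph_connected N"
    and b_img: "\<And>i. \<exists>x. matvec (A i) x = b i"
    and proj: "\<And>i. orth_proj_matrix (P i) (matker (A i))"
    and convex: "\<And>i. convex_on UNIV (f i)"
    and grad_deriv: "\<And>i x. (f i has_derivative (\<lambda>h. grad i x \<bullet> h)) (at x)"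
    and grad_cont: "\<And>i. continuous_on UNIV (grad i)"
    and grad_lip: "\<And>i. \<exists>L. \<forall>x y. norm (grad i x - grad i y) \<le> L * norm (x - y)"
    and rank: "stacked_rank A < CARD('n)"
    and feas: "\<exists>x. feasible A b x"
    and minex: "\<exists>x. is_constrained_minimizer f A b x"
  shows "(\<exists>xs ys. equilibrium N grad A b P xs ys) \<and>
         (\<forall>xs ys. equilibrium N grad A b P xs ys \<longrightarrow>
            (\<exists>xstar. (\<forall>i. xs i = xstar) \<and> is_constrained_minimizer f A b xstar))"
proof -
  have mk: "s \<in> matker (A i) \<longleftrightarrow> (\<forall>r\<in>set (A i). r \<bullet> s = 0)" for i s
    unfolding matker_def using matvec_zero_iff by blast
  have part1: "\<exists>xs ys. equilibrium N grad A b P xs ys"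
  proof -
    obtain xm where xm: "is_constrained_minimizer f A b xm" using minex by blast
    define G where "G = (\<Sum>i\<in>UNIV. grad i xm)"
    have "((\<lambda>x. \<Sum>i\<in>UNIV. f i x) has_derivative (\<lambda>h. \<Sum>i\<in>UNIV. grad i xm \<bullet> h)) (at xm)"
      by (intro has_derivative_sum grad_deriv)
    moreover have "(\<lambda>h. \<Sum>i\<in>UNIV. grad i xm \<bullet> h) = (\<lambda>h. G \<bullet> h)"
      by (simp add: G_def inner_sum_left)
    ultimately have Fd: "((\<lambda>x. \<Sum>i\<in>UNIV. f i x) has_derivative (\<lambda>h. G \<bullet> h)) (at xm)" by simp
    have orth: "G \<bullet> v = 0" if v: "\<forall>i. \<forall>r\<in>set (A i). r \<bullet> v = 0" for v
    proof (rule stationary[OF Fd])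
      fix t :: real
      have "feasible A b (xm + t *\<^sub>R v)"
        unfolding feasible_def
      proof
        fix i
        have "\<forall>r\<in>set (A i). r \<bullet> (t *\<^sub>R v) = 0" using v by simp
        then have "matvec (A i) (xm + t *\<^sub>R v) = matvec (A i) xm" by (rule matvec_add_orth)
        then show "matvec (A i) (xm + t *\<^sub>R v) = b i"
          using xm unfolding is_constrained_minimizer_def feasible_def by simp
      qed
      then show "(\<Sum>i\<in>UNIV. f i xm) \<le> (\<Sum>i\<in>UNIV. f i (xm + t *\<^sub>R v))"
        using xm unfolding is_constrained_minimizer_def by blast
    qed
    define R where "R = (\<Union>i. set (A i))"
    have "G \<in> orthogonal_comp (orthogonal_comp (span R))"
      unfolding orthogonal_comp_def orthogonal_def
    proof (rule CollectI, rule ballI)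
      fix y assume "y \<in> {x. \<forall>y\<in>span R. y \<bullet> x = 0}"
      then have y: "\<forall>x\<in>span R. x \<bullet> y = 0" by simp
      have "\<forall>i. \<forall>r\<in>set (A i). r \<bullet> y = 0"
      proof (intro allI ballI)
        fix i r assume "r \<in> set (A i)"
        then have "r \<in> span R" unfolding R_def by (intro span_base) blast
        then show "r \<bullet> y = 0" using y by blast
      qed
      then have "G \<bullet> y = 0" by (rule orth)
      then show "y \<bullet> G = 0" by (simp only: inner_commute)
    qed
    then have "G \<in> span R" using orthogonal_comp_self[OF subspace_span[of R]] by simp
    then obtain u where u: "\<forall>i\<in>UNIV. u i \<in> span (set (A i))" "G = (\<Sum>i\<in>UNIV. u i)"
      using span_UN_decomp[of UNIV G "\<lambda>i. set (A i)"] unfolding R_def by auto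
    define ys where "ys = (\<lambda>i. u i - grad i xm)"
    have "equilibrium N grad A b P (\<lambda>_. xm) ys"
      unfolding equilibrium_def
    proof (intro conjI allI)
      fix i
      show "matvec (A i) xm = b i" using xm unfolding is_constrained_minimizer_def feasible_def by blast
      show "0 = (\<Sum>j\<in>N i. xm - xm)" by simp
      have "P i *v u i = 0"
      proof (rule proj_zero[OF proj])
        show "\<forall>s\<in>matker (A i). u i \<bullet> s = 0" using u(1) span_orth mk by blast
      qed
      then show "0 = - (P i *v (grad i xm + (\<Sum>j\<in>N i. xm - xm) + ys i))"
        by (simp add: ys_def)
    next
      show "(\<Sum>i\<in>UNIV. ys i) = 0" unfolding ys_def by (simp add: sum_subtractf u(2)[symmetric] G_def)
    qed
    then show ?thesis by blast
  qed
  have part2: "\<exists>xstar. (\<forall>i. xs i = xstar) \<and> is_constrained_minimizer f A b xstar"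
    if eqm: "equilibrium N grad A b P xs ys" for xs ys
  proof -
    define xstar where "xstar = xs undefined"
    have cons: "xs i = xstar" for i
      unfolding xstar_def using consensus[OF conn] eqm unfolding equilibrium_def by blast
    have feasx: "feasible A b xstar"
      unfolding feasible_def
    proof
      fix i
      have "matvec (A i) (xs i) = b i" using eqm unfolding equilibrium_def by blast
      then show "matvec (A i) xstar = b i" using cons[of i] by simp
    qed
    have "(\<Sum>i\<in>UNIV. f i xstar) \<le> (\<Sum>i\<in>UNIV. f i z)" if fz: "feasible A b z" for z
    proof -
      define d where "d = z - xstar"
      have dk: "d \<in> matker (A i)" for i
      proof -
        have "matvec (A i) z = matvec (A i) xstar" using fz feasx unfolding feasible_def by simp
        then have "\<forall>r\<in>set (A i). r \<bullet> d = 0" unfolding d_def by (rule matvec_diff_orth)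
        then show ?thesis using mk by blast
      qed
      have z0: "(grad i xstar + ys i) \<bullet> d = 0" for i
      proof (rule proj_zero_orth[OF proj _ dk])
        have "0 = - (P i *v (grad i (xs i) + (\<Sum>j\<in>N i. xs i - xs j) + ys i))"
          "0 = (\<Sum>j\<in>N i. xs i - xs j)" using eqm unfolding equilibrium_def by blast+
        then have "0 = - (P i *v (grad i (xs i) + ys i))" by simp
        then show "P i *v (grad i xstar + ys i) = 0" using cons[of i] by simp
      qed
      have sy: "(\<Sum>i\<in>UNIV. ys i) = 0" using eqm unfolding equilibrium_def by blast
      have "(\<Sum>i\<in>UNIV. grad i xstar \<bullet> d) = (\<Sum>i\<in>UNIV. (grad i xstar + ys i) \<bullet> d) - (\<Sum>i\<in>UNIV. ys i) \<bullet> d"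
        by (simp add: inner_add_left sum.distrib inner_sum_left)
      also have "\<dots> = 0" using z0 sy by simp
      finally have g0: "(\<Sum>i\<in>UNIV. grad i xstar \<bullet> d) = 0" .
      have "(\<Sum>i\<in>UNIV. f i xstar + grad i xstar \<bullet> d) \<le> (\<Sum>i\<in>UNIV. f i z)"
        by (intro sum_mono) (simp add: d_def above_tangent[OF convex grad_deriv])
      then show ?thesis using g0 by (simp add: sum.distrib)
    qed
    then show ?thesis using cons feasx unfolding is_constrained_minimizer_def by blast
  qed
  show ?thesis using part1 part2 by blast
qed

end
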